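(* Let $n\ge2$, let $\pi$ be uniform on $\mathrm{PF}_n$ and $f$ uniform on $\widetilde{\mathcal F}_n$. For $g\in\widetilde{\mathcal F}_n$ and $1\le i\le n-1$ let $X_i(g)=1$ if $g(i+1)<g(i)$ and $0$ otherwise. Then for all $t_1,\dots,t_{n-1}\in\{0,1\}$, $$P\{X_1(\pi)=t_1,\dots,X_{n-1}(\pi)=t_{n-1}\}=P\{X_1(f)=t_1,\dots,X_{n-1}(f)=t_{n-1}\}.$$ The same equality of joint distributions holds when $X_i$ is replaced by each of the indicators of $g(i+1)=g(i)$, of $g(i+1)\le g(i)$, of $g(i+1)>g(i)$, and of $g(i+1)\ge g(i)$.
   Context: A parking function of length $n$ is a sequence $(\pi_1,\dots,\pi_n)$ with $1\le\pi_i\le n$ such that $\#\{t:\pi_t\le i\}\ge i$ for all $1\le i\le n$; $\mathrm{PF}_n$ denotes the set of these. $\widetilde{\mathcal F}_n$ is the set of all functions $g:[n]\to[n+1]$ (written as sequences $(g(1),\dots,g(n))$), so $\mathrm{PF}_n\subseteq\widetilde{\mathcal F}_n$ and $|\widetilde{\mathcal F}_n|=(n+1)^n=(n+1)|\mathrm{PF}_n|$. *)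

theory Defs
  imports "HOL-Probability.Probability"
begin

definition Ftilde :: "nat \<Rightarrow> (nat \<Rightarrow> nat) set" where
  "Ftilde n = {1..n} \<rightarrow>\<^sub>E {1..n+1}"

definition PF :: "nat \<Rightarrow> (nat \<Rightarrow> nat) set" where
  "PF n = {p \<in> {1..n} \<rightarrow>\<^sub>E {1..n}.
             \<forall>i\<in>{1..n}. card {t\<in>{1..n}. p t \<le> i} \<ge> i}"

definition Xind :: "(nat \<Rightarrow> nat \<Rightarrow> bool) \<Rightarrow> (nat \<Rightarrow> nat) \<Rightarrow> nat \<Rightarrow> nat" where
  "Xind R g i = (if R (g (i+1)) (g i) then 1 else 0)"

end

theory Submission
  imports Defs
begin

fun bs :: "(nat \<Rightarrow> nat) \<Rightarrow> nat list \<Rightarrow> nat list \<Rightarrow> bool" where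
  "bs k [] xs = True"
| "bs k (b#\<beta>) xs = (sorted (map k (take b xs)) \<and> bs k \<beta> (drop b xs))"

fun rs :: "(nat \<Rightarrow> nat) \<Rightarrow> nat list \<Rightarrow> nat list \<Rightarrow> nat list" where
  "rs k [] xs = xs"
| "rs k (b#\<beta>) xs = sort_key k (take b xs) @ rs k \<beta> (drop b xs)"

lemma rs_length[simp]: "length (rs k \<beta> xs) = length xs"
  by (induction \<beta> arbitrary: xs) auto

lemma rs_mset[simp]: "mset (rs k \<beta> xs) = mset xs"
proof (induction \<beta> arbitrary: xs)
  case (Cons b \<beta>)
  then show ?case by (simp, metis append_take_drop_id mset_append)
qed simp

lemma rs_set[simp]: "set (rs k \<beta> xs) = set xs"
  by (metis rs_mset set_mset_mset)

lemma rs_bs: "length xs = sum_list \<beta> \<Longrightarrow> bs k \<beta> (rs k \<beta> xs)"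
proof (induction \<beta> arbitrary: xs)
  case (Cons b \<beta>)
  have "length (take b xs) = b" using Cons.prems by simp
  then show ?case using Cons by simp
qed simp

lemma bs_rs: "bs k \<beta> xs \<Longrightarrow> rs k \<beta> xs = xs"
  by (induction \<beta> arbitrary: xs) (auto simp: sort_key_id_if_sorted)

lemma rs_rs: "inj_on k1 X \<Longrightarrow> set xs \<subseteq> X \<Longrightarrow> length xs = sum_list \<beta> \<Longrightarrow>
   rs k1 \<beta> (rs k2 \<beta> xs) = rs k1 \<beta> xs"
proof (induction \<beta> arbitrary: xs)
  case (Cons b \<beta>)
  have lt: "length (take b xs) = b" using Cons.prems by simp
  have st: "set (take b xs) \<subseteq> X" using Cons.prems(2) by (meson order_trans set_take_subset)
  have "sort_key k1 (sort_key k2 (take b xs)) = sort_key k1 (take b xs)"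
    apply (rule sort_key_inj_key_eq)
      apply simp
     apply (simp, meson Cons.prems(1) inj_on_subset st)
    by simp
  moreover have "rs k1 \<beta> (rs k2 \<beta> (drop b xs)) = rs k1 \<beta> (drop b xs)"
  proof (rule Cons.IH[OF Cons.prems(1)])
    show "set (drop b xs) \<subseteq> X" using Cons.prems(2) set_drop_subset by (metis subset_trans)
    show "length (drop b xs) = sum_list \<beta>" using Cons.prems(3) by simp
  qed
  ultimately show ?case using lt by simp
qed simp

lemma core_list:
  assumes "inj_on k1 X" "inj_on k2 X"
  shows "card {xs. length xs = sum_list \<beta> \<and> set xs \<subseteq> X \<and> P (mset xs) \<and> bs k1 \<beta> xs}
       = card {xs. length xs = sum_list \<beta> \<and> set xs \<subseteq> X \<and> P (mset xs) \<and> bs k2 \<beta> xs}"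
proof (rule bij_betw_same_card[of "rs k2 \<beta>"], rule bij_betw_byWitness[where f'="rs k1 \<beta>"])
  show "\<forall>a\<in>{xs. length xs = sum_list \<beta> \<and> set xs \<subseteq> X \<and> P (mset xs) \<and> bs k1 \<beta> xs}.
       rs k1 \<beta> (rs k2 \<beta> a) = a"
    using rs_rs[OF assms(1)] bs_rs by auto
  show "\<forall>a\<in>{xs. length xs = sum_list \<beta> \<and> set xs \<subseteq> X \<and> P (mset xs) \<and> bs k2 \<beta> xs}.
       rs k2 \<beta> (rs k1 \<beta> a) = a"
    using rs_rs[OF assms(2)] bs_rs by auto
qed (auto simp: rs_bs)

fun cmp :: "bool list \<Rightarrow> nat list" where
  "cmp [] = [1]"
| "cmp (True # cs) = (case cmp cs of [] \<Rightarrow> [] | b # bb \<Rightarrow> Suc b # bb)"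
| "cmp (False # cs) = 1 # cmp cs"

lemma cmp_ok: "cmp cs \<noteq> [] \<and> (\<forall>b\<in>set (cmp cs). b \<ge> 1) \<and> sum_list (cmp cs) = Suc (length cs)"
proof (induction cs rule: cmp.induct)
  case (2 cs)
  then show ?case by (cases "cmp cs") auto
qed auto

definition cns :: "(nat \<Rightarrow> nat) \<Rightarrow> bool list \<Rightarrow> nat list \<Rightarrow> bool" where
  "cns k cs xs = (\<forall>j<length cs. cs!j \<longrightarrow> k (xs!j) \<le> k (xs!Suc j))"

lemma cns_Cons: "cns k (c # cs) (x # y # ys) = ((c \<longrightarrow> k x \<le> k y) \<and> cns k cs (y # ys))"
  unfolding cns_def
  apply (auto simp: less_Suc_eq_0_disj)
  done

lemma bs_cmp: "length xs = Suc (length cs) \<Longrightarrow> bs k (cmp cs) xs = cns k cs xs"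
proof (induction cs arbitrary: xs rule: cmp.induct)
  case 1
  then show ?case by (cases xs) (auto simp: cns_def)
next
  case (2 cs)
  obtain x y ys where xs: "xs = x # y # ys" using 2(2)
    by (metis Suc_length_conv)
  obtain b bb where c: "cmp cs = b # bb" using cmp_ok[of cs] by (cases "cmp cs") auto
  have b1: "b \<ge> 1" using cmp_ok[of cs] c by auto
  then obtain b' where b': "b = Suc b'" by (cases b) auto
  have IH: "bs k (cmp cs) (y # ys) = cns k cs (y # ys)" using 2 xs by simp
  show ?case using IH apply (simp add: xs c b' cns_Cons) by (meson order_trans)
next
  case (3 cs)
  obtain x y ys where xs: "xs = x # y # ys" using 3(2)
    by (metis Suc_length_conv)
  have IH: "bs k (cmp cs) (y # ys) = cns k cs (y # ys)" using 3 xs by simp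
  show ?case using IH unfolding xs by (simp add: cns_Cons)
qed

lemma inversion:
  fixes a b :: "'a set \<Rightarrow> nat"
  assumes "finite U" and "\<And>S. S \<subseteq> U \<Longrightarrow> (\<Sum>D\<in>Pow S. a D) = (\<Sum>D\<in>Pow S. b D)"
  shows "S \<subseteq> U \<Longrightarrow> a S = b S"
proof (induction "card S" arbitrary: S rule: less_induct)
  case less
  have fS: "finite S" using less.prems assms(1) finite_subset by blast
  have IH: "\<And>D. D \<in> Pow S - {S} \<Longrightarrow> a D = b D"
  proof -
    fix D assume "D \<in> Pow S - {S}"
    then have "D \<subset> S" by auto
    then have "card D < card S" using fS psubset_card_mono by blast
    then show "a D = b D" using less \<open>D \<subset> S\<close> by auto
  qed
  have "(\<Sum>D\<in>Pow S. a D) = a S + (\<Sum>D\<in>Pow S - {S}. a D)"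
    using fS by (simp add: sum.remove)
  moreover have "(\<Sum>D\<in>Pow S. b D) = b S + (\<Sum>D\<in>Pow S - {S}. b D)"
    using fS by (simp add: sum.remove)
  moreover have "(\<Sum>D\<in>Pow S - {S}. a D) = (\<Sum>D\<in>Pow S - {S}. b D)"
    using IH by (rule sum.cong[OF refl])
  ultimately show ?case using assms(2)[OF less.prems] by simp
qed

definition desc :: "(nat \<Rightarrow> nat) \<Rightarrow> nat list \<Rightarrow> nat set" where
  "desc k xs = {j. Suc j < length xs \<and> k (xs!Suc j) < k (xs!j)}"

lemma desc_sub_cons: "length xs = Suc N \<Longrightarrow>
   (desc k xs \<subseteq> S) = cns k (map (\<lambda>j. j \<notin> S) [0..<N]) xs"
  unfolding desc_def cns_def by (auto simp: not_less)

lemma core_desc: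
  assumes "inj_on k1 X" "inj_on k2 X" "finite X"
  shows "card {xs. length xs = Suc N \<and> set xs \<subseteq> X \<and> P (mset xs) \<and> desc k1 xs = D}
       = card {xs. length xs = Suc N \<and> set xs \<subseteq> X \<and> P (mset xs) \<and> desc k2 xs = D}"
proof (cases "D \<subseteq> {..<N}")
  case True
  define A where "A k D = card {xs. length xs = Suc N \<and> set xs \<subseteq> X \<and> P (mset xs) \<and> desc k xs = D}" for k D
  have fin: "finite {xs. set xs \<subseteq> X \<and> length xs = Suc N}"
    by (rule finite_lists_length_eq[OF assms(3)])
  have sub: "(\<Sum>D\<in>Pow S. A k D) = card {xs. length xs = Suc N \<and> set xs \<subseteq> X \<and> P (mset xs) \<and> desc k xs \<subseteq> S}"
    if "S \<subseteq> {..<N}" for S k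
  proof -
    have fS: "finite S" using that finite_subset by blast
    have "{xs. length xs = Suc N \<and> set xs \<subseteq> X \<and> P (mset xs) \<and> desc k xs \<subseteq> S}
       = (\<Union>D\<in>Pow S. {xs. length xs = Suc N \<and> set xs \<subseteq> X \<and> P (mset xs) \<and> desc k xs = D})"
      by auto
    then have "card {xs. length xs = Suc N \<and> set xs \<subseteq> X \<and> P (mset xs) \<and> desc k xs \<subseteq> S}
       = (\<Sum>D\<in>Pow S. card {xs. length xs = Suc N \<and> set xs \<subseteq> X \<and> P (mset xs) \<and> desc k xs = D})"
      apply simp
      apply (rule card_UN_disjoint)
      using fS apply simp
       apply (rule ballI, rule finite_subset[OF _ fin], blast)
      by blast
    then show ?thesis unfolding A_def by simp
  qed
  have eqsub: "card {xs. length xs = Suc N \<and> set xs \<subseteq> X \<and> P (mset xs) \<and> desc k1 xs \<subseteq> S}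
     = card {xs. length xs = Suc N \<and> set xs \<subseteq> X \<and> P (mset xs) \<and> desc k2 xs \<subseteq> S}" for S
  proof -
    let ?cs = "map (\<lambda>j. j \<notin> S) [0..<N]"
    have l: "sum_list (cmp ?cs) = Suc N" using cmp_ok[of ?cs] by simp
    have e: "{xs. length xs = Suc N \<and> set xs \<subseteq> X \<and> P (mset xs) \<and> desc k xs \<subseteq> S}
        = {xs. length xs = sum_list (cmp ?cs) \<and> set xs \<subseteq> X \<and> P (mset xs) \<and> bs k (cmp ?cs) xs}" for k
      unfolding l using desc_sub_cons[of _ N k S] bs_cmp[of _ ?cs k] by auto
    show ?thesis unfolding e by (rule core_list[OF assms(1,2)])
  qed
  have "A k1 D = A k2 D"
    apply (rule inversion[of "{..<N}"])
    using sub eqsub True by auto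
  then show ?thesis unfolding A_def .
next
  case False
  then have "\<And>k xs. length xs = Suc N \<Longrightarrow> desc k xs \<noteq> D" unfolding desc_def by auto
  then have e: "\<And>k. {xs. length xs = Suc N \<and> set xs \<subseteq> X \<and> P (mset xs) \<and> desc k xs = D} = {}"
    by blast
  show ?thesis by (simp only: e)
qed

definition rot :: "nat \<Rightarrow> nat \<Rightarrow> nat \<Rightarrow> nat" where
  "rot m k v = (v + k - 1) mod m + 1"

definition Rk :: "nat \<Rightarrow> nat \<Rightarrow> (nat \<Rightarrow> nat) \<Rightarrow> (nat \<Rightarrow> nat)" where
  "Rk n k p = restrict (\<lambda>t. rot (Suc n) k (p t)) {1..n}"

lemma rot_range: "0 < m \<Longrightarrow> rot m k v \<in> {1..m}"
  unfolding rot_def by (auto simp: Suc_le_eq)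

lemma rot_0: "v \<in> {1..m} \<Longrightarrow> rot m 0 v = v"
  unfolding rot_def by auto

lemma rot_add: "1 \<le> v \<Longrightarrow> rot m a (rot m b v) = rot m (a + b) v"
proof -
  assume v: "1 \<le> v"
  have e: "v + (a + b) - 1 = a + (v + b - 1)" using v by simp
  have f: "(v + b - 1) mod m + 1 + a - 1 = a + (v + b - 1) mod m" by simp
  have g: "(a + (v + b - 1) mod m) mod m = (a + (v + b - 1)) mod m" by (rule mod_add_right_eq)
  show ?thesis unfolding rot_def e f g by (rule refl)
qed

lemma rot_mod: "1 \<le> v \<Longrightarrow> rot m (k mod m) v = rot m k v"
proof -
  assume v: "1 \<le> v"
  have a: "v + k mod m - 1 = (v - 1) + k mod m" "v + k - 1 = (v - 1) + k" using v by auto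
  show ?thesis unfolding rot_def a by (simp add: mod_add_right_eq)
qed

lemma rot_inj: "inj_on (rot m k) {1..m}"
proof (rule inj_onI)
  fix x y assume xy: "x \<in> {1..m}" "y \<in> {1..m}" "rot m k x = rot m k y"
  have "rot m (m - k mod m) (rot m k x) = rot m (m - k mod m) (rot m k y)" using xy by simp
  moreover have bk: "rot m (m - k mod m) (rot m k z) = z" if "z \<in> {1..m}" for z
  proof -
    have "rot m (m - k mod m) (rot m k z) = rot m (m - k mod m) (rot m (k mod m) z)" using that by (simp add: rot_mod)
    also have "\<dots> = rot m (m - k mod m + k mod m) z" using that by (simp add: rot_add)
    also have "m - k mod m + k mod m = m" using that mod_less_divisor[of m k] by simp
    also have "rot m m z = rot m 0 z" using rot_mod[of z m m] rot_mod[of z m 0] that by simp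
    also have "\<dots> = z" using that by (rule rot_0)
    finally show ?thesis .
  qed
  ultimately show "x = y" using xy(1,2) bk by metis
qed

lemma cyclic:
  fixes H :: "nat \<Rightarrow> int"
  assumes m: "0 < m" and per: "\<And>x. x\<in>{1..m} \<Longrightarrow> H (x+m) = H x - 1"
  shows "\<exists>!j. j\<in>{1..m} \<and> (\<forall>i\<in>{1..<m}. H j \<le> H (j+i))"
proof -
  define \<mu> where "\<mu> = Min (H ` {1..m})"
  have fin: "finite (H ` {1..m})" by simp
  have ne: "H ` {1..m} \<noteq> {}" using m by auto
  have mu_le: "\<mu> \<le> H x" if "x \<in> {1..m}" for x unfolding \<mu>_def using fin that by simp
  have "\<mu> \<in> H ` {1..m}" unfolding \<mu>_def using fin ne by (rule Min_in)
  then obtain x0 where x0: "x0 \<in> {1..m}" "H x0 = \<mu>" by auto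
  define j where "j = (LEAST x. x \<in> {1..m} \<and> H x = \<mu>)"
  have j: "j \<in> {1..m} \<and> H j = \<mu>" unfolding j_def by (rule LeastI[of _ x0]) (use x0 in auto)
  have jmin: "\<not> (x \<in> {1..m} \<and> H x = \<mu>)" if "x < j" for x
    using not_less_Least[of x "\<lambda>x. x \<in> {1..m} \<and> H x = \<mu>"] that unfolding j_def by blast
  have good: "\<forall>i\<in>{1..<m}. H j \<le> H (j+i)"
  proof
    fix i assume i: "i \<in> {1..<m}"
    show "H j \<le> H (j+i)"
    proof (cases "j + i \<le> m")
      case True
      then show ?thesis using mu_le[of "j+i"] j i by auto
    next
      case False
      define y where "y = j + i - m"
      have y: "y \<in> {1..m}" "y < j" "j + i = y + m" using False i j unfolding y_def by auto
      have "H y \<noteq> \<mu>" using jmin[OF y(2)] y(1) by blast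
      then have "H y > \<mu>" using mu_le[OF y(1)] by simp
      then show ?thesis using per[OF y(1)] y(3) j by simp
    qed
  qed
  show ?thesis
  proof (rule ex1I[of _ j])
    show "j \<in> {1..m} \<and> (\<forall>i\<in>{1..<m}. H j \<le> H (j+i))" using j good by blast
  next
    have uniq: False if a: "a \<in> {1..m}" "\<forall>i\<in>{1..<m}. H a \<le> H (a+i)"
      and b: "b \<in> {1..m}" "\<forall>i\<in>{1..<m}. H b \<le> H (b+i)" and ab: "a < b" for a b
    proof -
      have "b - a \<in> {1..<m}" using ab b(1) a(1) by auto
      then have "H a \<le> H (a + (b - a))" using a(2) by blast
      then have 1: "H a \<le> H b" using ab by simp
      have "m - (b - a) \<in> {1..<m}" using ab b(1) a(1) by auto
      then have "H b \<le> H (b + (m - (b - a)))" using b(2) by blast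
      moreover have eq: "b + (m - (b - a)) = a + m" using ab b(1) by auto
      moreover have "H (b + (m - (b - a))) = H a - 1" using per[OF a(1)] by (simp only: eq)
      ultimately have "H b \<le> H a - 1" by simp
      then show False using 1 by simp
    qed
    fix x assume x: "x \<in> {1..m} \<and> (\<forall>i\<in>{1..<m}. H x \<le> H (x+i))"
    show "x = j"
    proof (rule ccontr)
      assume "x \<noteq> j"
      then show False
        using uniq[of x j] uniq[of j x] x j good by (cases "x < j") auto
    qed
  qed
qed

definition G :: "nat \<Rightarrow> (nat\<Rightarrow>nat) \<Rightarrow> nat \<Rightarrow> nat" where
  "G n f x = card {t\<in>{1..n}. f t \<le> x} + card {t\<in>{1..n}. f t + Suc n \<le> x}"

lemma rot_shj:
  assumes "v \<in> {1..m}" "j \<in> {1..m}"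
  shows "rot m (m - j) v = (if v \<le> j then v + m - j else v - j)"
proof (cases "v \<le> j")
  case True
  then have "v + (m - j) - 1 < m" using assms by auto
  then show ?thesis using True assms unfolding rot_def by auto
next
  case False
  then have a: "m \<le> v + (m - j) - 1" "v + (m - j) - 1 - m < m" using assms by auto
  have "(v + (m - j) - 1) mod m = v + (m - j) - 1 - m"
    using le_mod_geq[OF a(1)] mod_less[OF a(2)] by simp
  then show ?thesis using False assms unfolding rot_def by auto
qed

lemma L1:
  assumes f: "\<forall>t\<in>{1..n}. f t \<in> {1..Suc n}" and j: "j \<in> {1..Suc n}" and i: "i \<le> Suc n"
  shows "card {t\<in>{1..n}. rot (Suc n) (Suc n - j) (f t) \<le> i} + G n f j = G n f (j+i)"
proof -
  let ?m = "Suc n"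
  define A1 where "A1 = {t\<in>{1..n}. f t \<le> j \<and> f t + ?m \<le> j + i}"
  define A2 where "A2 = {t\<in>{1..n}. j < f t \<and> f t \<le> j + i}"
  define B where "B = {t\<in>{1..n}. f t \<le> j}"
  have e1: "{t\<in>{1..n}. rot ?m (?m - j) (f t) \<le> i} = A1 \<union> A2"
    unfolding A1_def A2_def using rot_shj[OF _ j] f j by auto
  have e2: "G n f j = card B"
  proof -
    have "f t \<ge> 1" if "t \<in> {1..n}" for t using f that by auto
    then have "{t\<in>{1..n}. f t + Suc n \<le> j} = {}" using j by fastforce
    then show ?thesis unfolding G_def B_def by simp
  qed
  have e3: "{t\<in>{1..n}. f t \<le> j + i} = B \<union> A2" unfolding B_def A2_def by auto
  have e4: "{t\<in>{1..n}. f t + Suc n \<le> j + i} = A1" unfolding A1_def using i by auto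
  have d1: "A1 \<inter> A2 = {}" "B \<inter> A2 = {}" unfolding A1_def A2_def B_def by auto
  have fins: "finite A1" "finite A2" "finite B" unfolding A1_def A2_def B_def by auto
  have g: "G n f (j+i) = card (B \<union> A2) + card A1" unfolding G_def e3 e4 by (rule refl)
  show ?thesis unfolding e1 e2 g
    using card_Un_disjoint[OF fins(1,2) d1(1)] card_Un_disjoint[OF fins(3,2) d1(2)] by simp
qed

lemma G_per:
  assumes f: "\<forall>t\<in>{1..n}. f t \<in> {1..Suc n}" and x: "x \<le> Suc n"
  shows "G n f (x + Suc n) = n + G n f x"
proof -
  have a: "{t\<in>{1..n}. f t \<le> x + Suc n} = {1..n}" using f by auto
  have b: "{t\<in>{1..n}. f t + Suc n \<le> x + Suc n} = {t\<in>{1..n}. f t \<le> x}" by auto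
  have "f t \<ge> 1" if "t \<in> {1..n}" for t using f that by auto
  then have c: "{t\<in>{1..n}. f t + Suc n \<le> x} = {}" using x by fastforce
  show ?thesis unfolding G_def a b c by simp
qed

lemma L2:
  assumes f: "f \<in> Ftilde n" and k: "k < Suc n"
  shows "Rk n k f \<in> PF n \<longleftrightarrow> (\<forall>i\<in>{1..n}. i \<le> card {t\<in>{1..n}. rot (Suc n) k (f t) \<le> i})"
proof -
  have c: "{t\<in>{1..n}. Rk n k f t \<le> i} = {t\<in>{1..n}. rot (Suc n) k (f t) \<le> i}" for i
    unfolding Rk_def by auto
  show ?thesis
  proof
    assume "Rk n k f \<in> PF n"
    then have "\<forall>i\<in>{1..n}. i \<le> card {t\<in>{1..n}. Rk n k f t \<le> i}"
      unfolding PF_def by blast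
    then show "\<forall>i\<in>{1..n}. i \<le> card {t\<in>{1..n}. rot (Suc n) k (f t) \<le> i}"
      by (simp only: c)
  next
    assume H: "\<forall>i\<in>{1..n}. i \<le> card {t\<in>{1..n}. rot (Suc n) k (f t) \<le> i}"
    have vals: "rot (Suc n) k (f t) \<le> n" if t: "t \<in> {1..n}" for t
    proof -
      have "n \<le> card {t\<in>{1..n}. rot (Suc n) k (f t) \<le> n}" using H t by auto
      then have "{t\<in>{1..n}. rot (Suc n) k (f t) \<le> n} = {1..n}"
        by (intro card_seteq) auto
      then show ?thesis using t by blast
    qed
    have "Rk n k f \<in> {1..n} \<rightarrow>\<^sub>E {1..n}"
      unfolding Rk_def using vals rot_range[of "Suc n" k] by auto
    moreover have "\<forall>i\<in>{1..n}. i \<le> card {t\<in>{1..n}. Rk n k f t \<le> i}" using H by (simp only: c)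
    ultimately show "Rk n k f \<in> PF n" unfolding PF_def by blast
  qed
qed

lemma pollak:
  assumes f: "f \<in> Ftilde n"
  shows "\<exists>!k. k < Suc n \<and> Rk n k f \<in> PF n"
proof -
  let ?m = "Suc n"
  have fv: "\<forall>t\<in>{1..n}. f t \<in> {1..Suc n}" using f unfolding Ftilde_def by auto
  define H where "H x = int (G n f x) - int x" for x
  have per: "H (x + ?m) = H x - 1" if "x \<in> {1..?m}" for x
    using G_per[OF fv, of x] that unfolding H_def by auto
  have goodiff: "Rk n (?m - j) f \<in> PF n \<longleftrightarrow> (\<forall>i\<in>{1..<?m}. H j \<le> H (j+i))" if j: "j \<in> {1..?m}" for j
  proof -
    have "Rk n (?m - j) f \<in> PF n \<longleftrightarrow> (\<forall>i\<in>{1..n}. i \<le> card {t\<in>{1..n}. rot ?m (?m - j) (f t) \<le> i})"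
      using L2[OF f, of "?m - j"] j by auto
    also have "\<dots> \<longleftrightarrow> (\<forall>i\<in>{1..n}. G n f j + i \<le> G n f (j+i))"
    proof -
      have "(i \<le> card {t\<in>{1..n}. rot ?m (?m - j) (f t) \<le> i}) \<longleftrightarrow> (G n f j + i \<le> G n f (j+i))"
        if i: "i \<in> {1..n}" for i
      proof -
        have "card {t\<in>{1..n}. rot ?m (?m - j) (f t) \<le> i} + G n f j = G n f (j+i)"
          using L1[OF fv j, of i] i by simp
        then show ?thesis by linarith
      qed
      then show ?thesis by blast
    qed
    also have "\<dots> \<longleftrightarrow> (\<forall>i\<in>{1..<?m}. H j \<le> H (j+i))"
    proof -
      have "(G n f j + i \<le> G n f (j+i)) \<longleftrightarrow> H j \<le> H (j+i)" for i
        unfolding H_def by linarith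
      moreover have "{1..<?m} = {1..n}" by auto
      ultimately show ?thesis by simp
    qed
    finally show ?thesis .
  qed
  obtain j where j: "j \<in> {1..?m}" "\<forall>i\<in>{1..<?m}. H j \<le> H (j+i)"
    and ju: "\<And>j'. j' \<in> {1..?m} \<Longrightarrow> \<forall>i\<in>{1..<?m}. H j' \<le> H (j'+i) \<Longrightarrow> j' = j"
  proof -
    have ex: "\<exists>!j. j\<in>{1..?m} \<and> (\<forall>i\<in>{1..<?m}. H j \<le> H (j+i))"
      by (rule cyclic) (simp, rule per)
    then show ?thesis using that by blast
  qed
  show ?thesis
  proof (rule ex1I[of _ "?m - j"])
    show "?m - j < ?m \<and> Rk n (?m - j) f \<in> PF n" using j goodiff[OF j(1)] by auto
  next
    fix k assume k: "k < ?m \<and> Rk n k f \<in> PF n"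
    have "?m - (?m - k) = k" using k by auto
    then have "Rk n (?m - (?m - k)) f \<in> PF n" using k by simp
    moreover have "?m - k \<in> {1..?m}" using k by auto
    ultimately have "?m - k = j" using goodiff[of "?m - k"] ju[of "?m - k"] by blast
    then show "k = ?m - j" using k by auto
  qed
qed

lemma rot_back: assumes "v \<in> {1..m}" "k < m" shows "rot m ((m - k) mod m) (rot m k v) = v"
proof -
  have "rot m ((m - k) mod m) (rot m k v) = rot m ((m - k) mod m + k) v"
    using assms by (simp add: rot_add)
  also have "\<dots> = rot m (((m - k) mod m + k) mod m) v" by (rule rot_mod[symmetric]) (use assms in auto)
  also have "((m - k) mod m + k) mod m = 0"
    using assms by (simp add: mod_add_left_eq)
  finally show ?thesis using assms rot_0 by simp
qed

lemma mod_k_eq: fixes k1 k2 m :: nat assumes "k1 < m" "k2 < m" "((m - k1) mod m + k2) mod m = 0" shows "k1 = k2"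
proof (cases "k1 = 0")
  case True
  then have "(m - k1) mod m = 0" by simp
  then have "k2 mod m = 0" using assms(3) by simp
  then show ?thesis using assms(2) True by simp
next
  case False
  then have e: "(m - k1) mod m = m - k1" using assms(1) by simp
  have h: "(m - k1 + k2) mod m = 0" using assms(3) unfolding e .
  show ?thesis
  proof (cases "k2 < k1")
    case True
    then have "m - k1 + k2 < m" "0 < m - k1 + k2" using assms(1) False by auto
    then have "(m - k1 + k2) mod m = m - k1 + k2" by simp
    then show ?thesis using h \<open>0 < m - k1 + k2\<close> by simp
  next
    case False
    then have a: "(m - k1 + k2) = m + (k2 - k1)" using assms(1) by arith
    have b: "k2 - k1 < m" using assms(2) by arith
    have "(m - k1 + k2) mod m = k2 - k1" unfolding a using b by simp
    then show ?thesis using h False by simp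
  qed
qed

lemma PF_sub: "PF n \<subseteq> Ftilde n"
  unfolding PF_def Ftilde_def using PiE_mono[of "{1..n}" "\<lambda>_. {1..n}" "\<lambda>_. {1..Suc n}"] by auto

lemma Rk_Ftilde: "Rk n k p \<in> Ftilde n"
  unfolding Rk_def Ftilde_def using rot_range[of "Suc n" k] by auto

lemma Rk_0: assumes "p \<in> Ftilde n" shows "Rk n 0 p = p"
proof (rule ext)
  fix x show "Rk n 0 p x = p x"
  proof (cases "x \<in> {1..n}")
    case True
    then have "p x \<in> {1..Suc n}" using assms unfolding Ftilde_def by auto
    then show ?thesis using True unfolding Rk_def by (simp add: rot_0)
  next
    case False
    then show ?thesis using assms unfolding Rk_def Ftilde_def by (auto simp: PiE_def extensional_def)
  qed
qed

lemma Rk_Rk: assumes "p \<in> Ftilde n" shows "Rk n a (Rk n b p) = Rk n ((a + b) mod Suc n) p"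
proof (rule ext)
  fix x show "Rk n a (Rk n b p) x = Rk n ((a + b) mod Suc n) p x"
  proof (cases "x \<in> {1..n}")
    case True
    then have "1 \<le> p x" using assms unfolding Ftilde_def by auto
    then show ?thesis using True unfolding Rk_def by (simp add: rot_add rot_mod)
  next
    case False
    then show ?thesis unfolding Rk_def by auto
  qed
qed

lemma count:
  assumes n: "1 \<le> n"
  shows "card (Ftilde n \<inter> E) = (\<Sum>k<Suc n. card {p\<in>PF n. Rk n k p \<in> E})"
proof -
  let ?m = "Suc n"
  let ?S = "Sigma {..<?m} (\<lambda>k. {p\<in>PF n. Rk n k p \<in> E})"
  have fin: "finite (PF n)" using PF_sub[of n] unfolding Ftilde_def
    by (meson finite_PiE finite_atLeastAtMost finite_subset)
  have "bij_betw (\<lambda>(k,p). Rk n k p) ?S (Ftilde n \<inter> E)"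
  proof (rule bij_betw_imageI)
    show "inj_on (\<lambda>(k,p). Rk n k p) ?S"
    proof (rule inj_onI, clarify)
      fix k1 p1 k2 p2
      assume a: "k1 < ?m" "p1 \<in> PF n" "Rk n k1 p1 \<in> E" "k2 < ?m" "p2 \<in> PF n" "Rk n k2 p2 \<in> E"
        and eq: "Rk n k1 p1 = Rk n k2 p2"
      have p1F: "p1 \<in> Ftilde n" and p2F: "p2 \<in> Ftilde n" using a PF_sub by auto
      define d where "d = ((?m - k1) mod ?m + k2) mod ?m"
      have "Rk n ((?m - k1) mod ?m) (Rk n k1 p1) = Rk n ((?m - k1) mod ?m) (Rk n k2 p2)"
        using eq by simp
      then have "Rk n (((?m - k1) mod ?m + k1) mod ?m) p1 = Rk n d p2"
        unfolding d_def using Rk_Rk p1F p2F by simp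
      moreover have "((?m - k1) mod ?m + k1) mod ?m = 0" using a(1) by (simp add: mod_add_left_eq)
      ultimately have p1d: "p1 = Rk n d p2" using Rk_0[OF p1F] by simp
      have "d < ?m" unfolding d_def by simp
      moreover have "0 < ?m" by simp
      moreover have "Rk n d p2 \<in> PF n" using p1d a(2) by simp
      moreover have "Rk n 0 p2 \<in> PF n" using Rk_0[OF p2F] a(5) by simp
      ultimately have "d = 0" using pollak[OF p2F] by blast
      then have "k1 = k2" using mod_k_eq[OF a(1) a(4)] unfolding d_def by simp
      moreover have "p1 = p2" using p1d \<open>d = 0\<close> Rk_0[OF p2F] by simp
      ultimately show "k1 = k2 \<and> p1 = p2" by simp
    qed
  next
    show "(\<lambda>(k,p). Rk n k p) ` ?S = Ftilde n \<inter> E"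
    proof
      show "(\<lambda>(k,p). Rk n k p) ` ?S \<subseteq> Ftilde n \<inter> E" using Rk_Ftilde by auto
    next
      show "Ftilde n \<inter> E \<subseteq> (\<lambda>(k,p). Rk n k p) ` ?S"
      proof
        fix f assume f: "f \<in> Ftilde n \<inter> E"
        obtain k0 where k0: "k0 < ?m" "Rk n k0 f \<in> PF n" using pollak[of f n] f by auto
        define k where "k = (?m - k0) mod ?m"
        have "Rk n k (Rk n k0 f) = Rk n ((k + k0) mod ?m) f" using Rk_Rk f by auto
        moreover have "(k + k0) mod ?m = 0" unfolding k_def using k0(1) by (simp add: mod_add_left_eq)
        ultimately have bk: "Rk n k (Rk n k0 f) = f" using Rk_0 f by auto
        have "k < ?m" unfolding k_def by simp
        then have "(k, Rk n k0 f) \<in> ?S" using k0 bk f by auto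
        then show "f \<in> (\<lambda>(k,p). Rk n k p) ` ?S" using bk by force
      qed
    qed
  qed
  then have "card (Ftilde n \<inter> E) = card ?S" by (simp add: bij_betw_same_card)
  also have "\<dots> = (\<Sum>k<?m. card {p\<in>PF n. Rk n k p \<in> E})"
    using fin by (subst card_SigmaI) auto
  finally show ?thesis .
qed

declare upt_Suc[simp del]

definition lst :: "nat \<Rightarrow> (nat \<Rightarrow> nat) \<Rightarrow> nat list" where
  "lst n p = map p [1..<Suc n]"

definition fn :: "nat \<Rightarrow> nat list \<Rightarrow> (nat \<Rightarrow> nat)" where
  "fn n xs = restrict (\<lambda>i. xs ! (i - 1)) {1..n}"

definition Pm :: "nat \<Rightarrow> nat multiset \<Rightarrow> bool" where
  "Pm n M = (\<forall>i\<in>{1..n}. i \<le> size (filter_mset (\<lambda>v. v \<le> i) M))"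

lemma lst_nth: "j < n \<Longrightarrow> lst n p ! j = p (Suc j)"
  unfolding lst_def by (simp add: nth_upt)

lemma length_lst[simp]: "length (lst n p) = n"
  unfolding lst_def by simp

lemma card_lst: "card {t\<in>{1..n}. p t \<le> i} = size (filter_mset (\<lambda>v. v \<le> i) (mset (lst n p)))"
proof -
  have "size (filter_mset (\<lambda>v. v \<le> i) (mset (lst n p))) = length (filter (\<lambda>v. v \<le> i) (lst n p))"
    by (metis mset_filter size_mset)
  also have "\<dots> = length (filter (\<lambda>t. p t \<le> i) [1..<Suc n])"
    unfolding lst_def by (simp add: filter_map comp_def)
  also have "\<dots> = card ({t. p t \<le> i} \<inter> set [1..<Suc n])"
    by (rule distinct_length_filter) simp
  also have "{t. p t \<le> i} \<inter> set [1..<Suc n] = {t\<in>{1..n}. p t \<le> i}" by auto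
  finally show ?thesis by simp
qed

lemma lst_fn: "length xs = n \<Longrightarrow> lst n (fn n xs) = xs"
  unfolding lst_def fn_def by (rule nth_equalityI) (auto simp: nth_upt)

lemma fn_lst: "p \<in> extensional {1..n} \<Longrightarrow> fn n (lst n p) = p"
  unfolding lst_def fn_def by (auto simp: fun_eq_iff extensional_def nth_upt)

lemma set_lst: "set (lst n p) = p ` {1..n}"
  unfolding lst_def by auto

lemma PF_lst_iff: "p \<in> PF n \<longleftrightarrow> p \<in> extensional {1..n} \<and> set (lst n p) \<subseteq> {1..n} \<and> Pm n (mset (lst n p))"
  unfolding PF_def Pm_def set_lst card_lst by (auto simp: PiE_iff image_subset_iff)

lemma B_gen:
  assumes "inj_on k1 {1..n}" "inj_on k2 {1..n}" "1 \<le> n"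
  shows "card {p\<in>PF n. desc k1 (lst n p) = D} = card {p\<in>PF n. desc k2 (lst n p) = D}"
proof -
  have bij: "card {p\<in>PF n. desc k (lst n p) = D} =
        card {xs. length xs = n \<and> set xs \<subseteq> {1..n} \<and> Pm n (mset xs) \<and> desc k xs = D}" for k
  proof (rule bij_betw_same_card[of "lst n"], rule bij_betw_byWitness[where f'="fn n"])
    show "\<forall>a\<in>{p \<in> PF n. desc k (lst n p) = D}. fn n (lst n a) = a"
      using PF_lst_iff fn_lst by auto
    show "\<forall>a\<in>{xs. length xs = n \<and> set xs \<subseteq> {1..n} \<and> Pm n (mset xs) \<and> desc k xs = D}. lst n (fn n a) = a"
      using lst_fn by auto
    show "lst n ` {p \<in> PF n. desc k (lst n p) = D}
        \<subseteq> {xs. length xs = n \<and> set xs \<subseteq> {1..n} \<and> Pm n (mset xs) \<and> desc k xs = D}"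
      using PF_lst_iff by auto
    show "fn n ` {xs. length xs = n \<and> set xs \<subseteq> {1..n} \<and> Pm n (mset xs) \<and> desc k xs = D}
        \<subseteq> {p \<in> PF n. desc k (lst n p) = D}"
    proof
      fix q assume "q \<in> fn n ` {xs. length xs = n \<and> set xs \<subseteq> {1..n} \<and> Pm n (mset xs) \<and> desc k xs = D}"
      then obtain xs where xs: "length xs = n" "set xs \<subseteq> {1..n}" "Pm n (mset xs)" "desc k xs = D"
        and q: "q = fn n xs" by blast
      have "fn n xs \<in> extensional {1..n}" unfolding fn_def by simp
      then have "fn n xs \<in> PF n \<and> desc k (lst n (fn n xs)) = D"
        using PF_lst_iff lst_fn[OF xs(1)] xs by simp
      then show "q \<in> {p \<in> PF n. desc k (lst n p) = D}" using q by simp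
    qed
  qed
  obtain N where N: "n = Suc N" using assms(3) by (cases n) auto
  show ?thesis unfolding bij unfolding N
    by (rule core_desc[OF assms(1,2)[unfolded N]]) simp
qed

lemma final:
  assumes "1 \<le> n" and eqs: "\<And>k. k < Suc n \<Longrightarrow> card {p\<in>PF n. Rk n k p \<in> E} = card (PF n \<inter> E)"
  shows "measure_pmf.prob (pmf_of_set (PF n)) E = measure_pmf.prob (pmf_of_set (Ftilde n)) E"
proof -
  have finF: "finite (Ftilde n)" unfolding Ftilde_def by (simp add: finite_PiE)
  have finP: "finite (PF n)" using PF_sub finF finite_subset by blast
  have "restrict (\<lambda>_. 1) {1..n} \<in> Ftilde n" unfolding Ftilde_def by auto
  then have neF: "Ftilde n \<noteq> {}" by auto
  have c1: "card (Ftilde n \<inter> E) = Suc n * card (PF n \<inter> E)"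
    using count[OF assms(1), of E] eqs by simp
  have c2: "card (Ftilde n) = Suc n * card (PF n)"
    using count[OF assms(1), of UNIV] by simp
  have "card (Ftilde n) > 0" using finF neF by (simp add: card_gt_0_iff)
  then have "card (PF n) > 0" using c2 by auto
  then have neP: "PF n \<noteq> {}" by auto
  have m1: "measure_pmf.prob (pmf_of_set (PF n)) E = card (PF n \<inter> E) / card (PF n)"
    by (rule measure_pmf_of_set[OF neP finP])
  have m2: "measure_pmf.prob (pmf_of_set (Ftilde n)) E = card (Ftilde n \<inter> E) / card (Ftilde n)"
    by (rule measure_pmf_of_set[OF neF finF])
  have r: "real (Suc n * a) / real (Suc n * b) = real a / real b" for a b
  proof -
    have "real (Suc n * a) / real (Suc n * b) = (real (Suc n) * real a) / (real (Suc n) * real b)"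
      by (simp only: of_nat_mult)
    also have "\<dots> = real a / real b" by (rule mult_divide_mult_cancel_left) simp
    finally show ?thesis .
  qed
  show ?thesis using m1 m2 r[of "card (PF n \<inter> E)" "card (PF n)"] unfolding c1 c2 by simp
qed

lemma desc_lst: "desc \<kappa> (lst n p) = {j. Suc j < n \<and> \<kappa> (p (Suc (Suc j))) < \<kappa> (p (Suc j))}"
  unfolding desc_def using lst_nth by auto

lemma Xcond:
  assumes p: "p \<in> PF n" and tv: "\<forall>i\<in>{1..n-1}. t i \<in> {0, 1}"
  shows "Rk n k p \<in> {g. \<forall>i\<in>{1..n-1}. Xind R g i = t i} \<longleftrightarrow>
    (\<forall>j. Suc j < n \<longrightarrow> (R (rot (Suc n) k (p (Suc (Suc j)))) (rot (Suc n) k (p (Suc j))) \<longleftrightarrow> t (Suc j) = 1))"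
proof -
  have a: "Xind R (Rk n k p) (Suc j) = t (Suc j) \<longleftrightarrow>
     (R (rot (Suc n) k (p (Suc (Suc j)))) (rot (Suc n) k (p (Suc j))) \<longleftrightarrow> t (Suc j) = 1)"
    if "Suc j < n" for j
  proof -
    have "t (Suc j) \<in> {0,1}" using tv that by auto
    then show ?thesis using that unfolding Xind_def Rk_def by auto
  qed
  show ?thesis
  proof
    assume "Rk n k p \<in> {g. \<forall>i\<in>{1..n-1}. Xind R g i = t i}"
    then show "\<forall>j. Suc j < n \<longrightarrow> (R (rot (Suc n) k (p (Suc (Suc j)))) (rot (Suc n) k (p (Suc j))) \<longleftrightarrow> t (Suc j) = 1)"
      using a by auto
  next
    assume H: "\<forall>j. Suc j < n \<longrightarrow> (R (rot (Suc n) k (p (Suc (Suc j)))) (rot (Suc n) k (p (Suc j))) \<longleftrightarrow> t (Suc j) = 1)"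
    show "Rk n k p \<in> {g. \<forall>i\<in>{1..n-1}. Xind R g i = t i}"
    proof (clarify)
      fix i assume i: "i \<in> {1..n-1}"
      then obtain j where j: "i = Suc j" "Suc j < n" by (cases i) auto
      show "Xind R (Rk n k p) i = t i" using a[OF j(2)] H j by auto
    qed
  qed
qed

lemma main_case:
  fixes \<kappa> :: "nat \<Rightarrow> nat \<Rightarrow> nat" and R :: "nat \<Rightarrow> nat \<Rightarrow> bool"
  assumes n: "1 \<le> n" and tv: "\<forall>i\<in>{1..n-1}. t i \<in> {0, 1}"
    and inj: "\<And>k. inj_on (\<kappa> k) {1..n}"
    and pw: "\<And>k x y. x \<in> {1..n} \<Longrightarrow> y \<in> {1..n} \<Longrightarrow>
       R (rot (Suc n) k y) (rot (Suc n) k x) = ((\<kappa> k y < \<kappa> k x) = b)"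
  shows "measure_pmf.prob (pmf_of_set (PF n)) {g. \<forall>i\<in>{1..n-1}. Xind R g i = t i}
       = measure_pmf.prob (pmf_of_set (Ftilde n)) {g. \<forall>i\<in>{1..n-1}. Xind R g i = t i}"
proof (rule final[OF n])
  define E where "E = {g. \<forall>i\<in>{1..n-1}. Xind R g i = t i}"
  define D where "D = {j. Suc j < n \<and> ((t (Suc j) = 1) = b)}"
  have Ck: "Rk n k p \<in> E \<longleftrightarrow> desc (\<kappa> k) (lst n p) = D" if p: "p \<in> PF n" for k p
  proof -
    have pv: "p i \<in> {1..n}" if "i \<in> {1..n}" for i using p that unfolding PF_def by auto
    have "Rk n k p \<in> E \<longleftrightarrow>
      (\<forall>j. Suc j < n \<longrightarrow> (R (rot (Suc n) k (p (Suc (Suc j)))) (rot (Suc n) k (p (Suc j))) \<longleftrightarrow> t (Suc j) = 1))"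
      unfolding E_def by (rule Xcond[OF p tv])
    also have "\<dots> \<longleftrightarrow> (\<forall>j. Suc j < n \<longrightarrow> ((\<kappa> k (p (Suc (Suc j))) < \<kappa> k (p (Suc j))) \<longleftrightarrow> ((t (Suc j) = 1) = b)))"
    proof -
      have "R (rot (Suc n) k (p (Suc (Suc j)))) (rot (Suc n) k (p (Suc j))) =
            ((\<kappa> k (p (Suc (Suc j))) < \<kappa> k (p (Suc j))) = b)" if "Suc j < n" for j
        using pw[OF pv pv] that by auto
      then show ?thesis by (cases b) auto
    qed
    also have "\<dots> \<longleftrightarrow> desc (\<kappa> k) (lst n p) = D"
      unfolding desc_lst D_def by auto
    finally show ?thesis .
  qed
  fix k assume k: "k < Suc n"
  have "card {p\<in>PF n. Rk n k p \<in> E} = card {p\<in>PF n. desc (\<kappa> k) (lst n p) = D}"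
    using Ck by (metis (no_types, lifting))
  also have "\<dots> = card {p\<in>PF n. desc (\<kappa> 0) (lst n p) = D}"
    by (rule B_gen[OF inj inj n])
  also have "\<dots> = card {p\<in>PF n. Rk n 0 p \<in> E}"
    using Ck by (metis (no_types, lifting))
  also have "{p\<in>PF n. Rk n 0 p \<in> E} = PF n \<inter> E"
    
  proof -
    have "Rk n 0 p = p" if "p \<in> PF n" for p using Rk_0 PF_sub that by blast
    then show ?thesis by auto
  qed
  finally show "card {p\<in>PF n. Rk n k p \<in> {g. \<forall>i\<in>{1..n-1}. Xind R g i = t i}}
     = card (PF n \<inter> {g. \<forall>i\<in>{1..n-1}. Xind R g i = t i})" unfolding E_def .
qed

theorem theorem7:
  fixes n :: nat and t :: "nat \<Rightarrow> nat" and R :: "nat \<Rightarrow> nat \<Rightarrow> bool"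
  assumes "n \<ge> 2"
    and "\<forall>i\<in>{1..n-1}. t i \<in> {0, 1}"
    and "R \<in> {(<), (=), (\<le>), (>), (\<ge>)}"
  shows "measure_pmf.prob (pmf_of_set (PF n))
           {g. \<forall>i\<in>{1..n-1}. Xind R g i = t i}
       = measure_pmf.prob (pmf_of_set (Ftilde n))
           {g. \<forall>i\<in>{1..n-1}. Xind R g i = t i}"
proof -
  have n: "1 \<le> n" using assms(1) by simp
  have injr: "inj_on (rot (Suc n) k) {1..n}" for k
    using rot_inj[of "Suc n" k] by (rule inj_on_subset) auto
  have rle: "rot (Suc n) k v \<le> Suc n" for k v using rot_range[of "Suc n" k v] by simp
  have injs: "inj_on (\<lambda>v. 2 * Suc n - rot (Suc n) k v) {1..n}" for k
  proof (rule inj_onI)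
    fix x y assume xy: "x \<in> {1..n}" "y \<in> {1..n}" "2 * Suc n - rot (Suc n) k x = 2 * Suc n - rot (Suc n) k y"
    then have "rot (Suc n) k x = rot (Suc n) k y" using rle[of k x] rle[of k y] by simp
    then show "x = y" using injr xy by (meson inj_onD)
  qed
  have pw4: "(rot (Suc n) k y > rot (Suc n) k x) = ((2 * Suc n - rot (Suc n) k y < 2 * Suc n - rot (Suc n) k x) = True)" for k x y
  proof -
    have "rot (Suc n) k y \<le> Suc n" "rot (Suc n) k x \<le> Suc n" by (rule rle)+
    then show ?thesis by auto
  qed
  have pw3: "(rot (Suc n) k y \<le> rot (Suc n) k x) = ((2 * Suc n - rot (Suc n) k y < 2 * Suc n - rot (Suc n) k x) = False)" for k x y
  proof -
    have "rot (Suc n) k y \<le> Suc n" "rot (Suc n) k x \<le> Suc n" by (rule rle)+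
    then show ?thesis by auto
  qed
  consider "R = (<)" | "R = (=)" | "R = (\<le>)" | "R = (>)" | "R = (\<ge>)" using assms(3) by blast
  then show ?thesis
  proof cases
    case 1
    show ?thesis
      by (rule main_case[OF n assms(2), where \<kappa>="\<lambda>k. rot (Suc n) k" and b=True])
        (use injr 1 in simp_all)
  next
    case 4
    show ?thesis
      by (rule main_case[OF n assms(2), where \<kappa>="\<lambda>k v. 2 * Suc n - rot (Suc n) k v" and b=True])
        (use injs pw4 4 in simp_all)
  next
    case 3
    show ?thesis
      by (rule main_case[OF n assms(2), where \<kappa>="\<lambda>k v. 2 * Suc n - rot (Suc n) k v" and b=False])
        (use injs pw3 3 in simp_all)
  next
    case 5
    show ?thesis
      by (rule main_case[OF n assms(2), where \<kappa>="\<lambda>k. rot (Suc n) k" and b=False])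
        (use injr 5 in \<open>simp_all add: not_less\<close>)
  next
    case 2
    show ?thesis
    proof (rule final[OF n])
      fix k assume k: "k < Suc n"
      let ?E = "{g. \<forall>i\<in>{1..n-1}. Xind R g i = t i}"
      have "Rk n k p \<in> ?E \<longleftrightarrow> Rk n 0 p \<in> ?E" if p: "p \<in> PF n" for p
      proof -
        have pv: "p i \<in> {1..n}" if "i \<in> {1..n}" for i using p that unfolding PF_def by auto
        have "rot (Suc n) k (p (Suc (Suc j))) = rot (Suc n) k (p (Suc j)) \<longleftrightarrow>
              rot (Suc n) 0 (p (Suc (Suc j))) = rot (Suc n) 0 (p (Suc j))" if "Suc j < n" for j
        proof -
          have a: "p (Suc (Suc j)) \<in> {1..n}" "p (Suc j) \<in> {1..n}" using pv that by auto
          then show ?thesis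
            using inj_on_eq_iff[OF injr[of k] a(1) a(2)] inj_on_eq_iff[OF injr[of 0] a(1) a(2)] by simp
        qed
        then show ?thesis using Xcond[OF p assms(2), of k R] Xcond[OF p assms(2), of 0 R] 2 by auto
      qed
      then have "{p\<in>PF n. Rk n k p \<in> ?E} = {p\<in>PF n. Rk n 0 p \<in> ?E}" by auto
      also have "\<dots> = PF n \<inter> ?E" 
  proof -
    have "Rk n 0 p = p" if "p \<in> PF n" for p using Rk_0 PF_sub that by blast
    then show ?thesis by auto
  qed
      finally show "card {p\<in>PF n. Rk n k p \<in> ?E} = card (PF n \<inter> ?E)" by simp
    qed
  qed
qed

end
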